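(* Let $X_1,\dots,X_n$ be arbitrary (possibly dependent) random variables with values in $[0,1]$, let $m\ge 2$ be an integer and $p\in[0,1]$ such that $\mathbb{E}\prod_{i\in A}X_i\le p^{|A|}$ for every $A\subseteq[n]$ with $|A|\le m$. If $m\le np$, then $$\mathbb{E}\Big(\sum_{i=1}^n X_i\Big)^m\le(2e^2np)^m,$$ and consequently $\Pr\big(\sum_i X_i\ge\alpha np\big)\le\big(\frac{2e^2}{\alpha}\big)^m$ for every $\alpha>0$. *)

theory Defs
  imports "HOL-Probability.Probability"
begin

end

theory Submission
  imports Defs
begin

lemma powsum_expand:
  fixes a :: "nat \<Rightarrow> real"
  assumes "finite I"
  shows "(\<Sum>i\<in>I. a i) ^ m = (\<Sum>f\<in>PiE {..<m} (\<lambda>_. I). \<Prod>j<m. a (f j))"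
proof -
  have "(\<Sum>i\<in>I. a i) ^ m = (\<Prod>j<m. \<Sum>i\<in>I. a i)" by simp
  also have "\<dots> = (\<Sum>f\<in>PiE {..<m} (\<lambda>_. I). \<Prod>j<m. a (f j))"
    by (rule prod_sum_PiE) (use assms in auto)
  finally show ?thesis .
qed

lemma prod_image_le:
  fixes a :: "nat \<Rightarrow> real" and f :: "nat \<Rightarrow> nat" and m :: nat
  assumes "\<And>i. i \<in> f ` {..<m} \<Longrightarrow> 0 \<le> a i \<and> a i \<le> 1"
  shows "(\<Prod>j<m. a (f j)) \<le> (\<Prod>i\<in>f ` {..<m}. a i)"
proof -
  have "(\<Prod>j<m. a (f j)) = (\<Prod>i\<in>f ` {..<m}. \<Prod>j\<in>{j. j \<in> {..<m} \<and> f j = i}. a (f j))"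
    by (rule prod.group[symmetric]) auto
  also have "\<dots> = (\<Prod>i\<in>f ` {..<m}. a i ^ card {j. j \<in> {..<m} \<and> f j = i})"
    by (intro prod.cong refl) simp
  also have "\<dots> \<le> (\<Prod>i\<in>f ` {..<m}. a i)"
  proof (intro prod_mono conjI)
    fix i assume i: "i \<in> f ` {..<m}"
    then have "{j. j \<in> {..<m} \<and> f j = i} \<noteq> {}" by auto
    then have c: "card {j. j \<in> {..<m} \<and> f j = i} \<ge> 1"
      by (simp add: Suc_le_eq card_gt_0_iff)
    show "0 \<le> a i ^ card {j. j \<in> {..<m} \<and> f j = i}" using assms[OF i] by simp
    show "a i ^ card {j. j \<in> {..<m} \<and> f j = i} \<le> a i"
      using power_decreasing[OF c, of "a i"] assms[OF i] by simp
  qed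
  finally show ?thesis .
qed

lemma count_bound:
  fixes p :: real
  assumes "0 \<le> p"
  shows "(\<Sum>f\<in>PiE {..<m} (\<lambda>_. {1..n::nat}). p ^ card (f ` {..<m}))
     \<le> (\<Sum>k=0..m. real (n choose k) * real k ^ m * p ^ k)"
proof -
  let ?P = "PiE {..<m} (\<lambda>_. {1..n::nat})"
  let ?T = "{B. B \<subseteq> {1..n} \<and> card B \<le> m}"
  have fT: "finite ?T" by (rule finite_subset[of _ "Pow {1..n}"]) auto
  have fP: "finite ?P" by (simp add: finite_PiE)
  have img: "(\<lambda>f. f ` {..<m}) ` ?P \<subseteq> ?T"
    by (auto simp: PiE_def Pi_def card_image_le intro!: order.trans[OF card_image_le])
  have "(\<Sum>f\<in>?P. p ^ card (f ` {..<m})) = (\<Sum>B\<in>?T. \<Sum>f\<in>{f. f \<in> ?P \<and> f ` {..<m} = B}. p ^ card (f ` {..<m}))"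
    by (rule sum.group[symmetric, OF fP fT img])
  also have "\<dots> \<le> (\<Sum>B\<in>?T. real (card B) ^ m * p ^ card B)"
  proof (rule sum_mono)
    fix B assume B: "B \<in> ?T"
    have sub: "{f. f \<in> ?P \<and> f ` {..<m} = B} \<subseteq> PiE {..<m} (\<lambda>_. B)"
      by (auto simp: PiE_def Pi_def)
    have fB: "finite B" using B finite_subset by auto
    have "(\<Sum>f\<in>{f. f \<in> ?P \<and> f ` {..<m} = B}. p ^ card (f ` {..<m}))
        = real (card {f. f \<in> ?P \<and> f ` {..<m} = B}) * p ^ card B" by simp
    also have "\<dots> \<le> real (card (PiE {..<m} (\<lambda>_. B))) * p ^ card B"
      by (intro mult_right_mono of_nat_mono card_mono sub) (auto simp: finite_PiE fB assms)
    also have "\<dots> = real (card B) ^ m * p ^ card B" by (simp add: card_PiE fB)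
    finally show "(\<Sum>f\<in>{f. f \<in> ?P \<and> f ` {..<m} = B}. p ^ card (f ` {..<m})) \<le> real (card B) ^ m * p ^ card B" .
  qed
  also have "\<dots> = (\<Sum>k\<in>{0..m}. \<Sum>B\<in>{B. B \<in> ?T \<and> card B = k}. real (card B) ^ m * p ^ card B)"
    by (rule sum.group[symmetric, OF fT]) auto
  also have "\<dots> = (\<Sum>k=0..m. real (n choose k) * real k ^ m * p ^ k)"
  proof (rule sum.cong[OF refl])
    fix k assume k: "k \<in> {0..m}"
    have e: "{B. B \<in> ?T \<and> card B = k} = {B. B \<subseteq> {1..n} \<and> card B = k}" using k by auto
    show "(\<Sum>B\<in>{B. B \<in> ?T \<and> card B = k}. real (card B) ^ m * p ^ card B) = real (n choose k) * real k ^ m * p ^ k"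
      unfolding e using n_subsets[of "{1..n}" k] by simp
  qed
  finally show ?thesis .
qed

lemma pow_fact_le_exp:
  fixes x :: real assumes "0 \<le> x"
  shows "x ^ k / fact k \<le> exp x"
proof -
  have s: "(\<lambda>n. x^n /\<^sub>R fact n) sums exp x" by (rule exp_converges)
  have "(\<Sum>n\<in>{k}. x^n /\<^sub>R fact n) \<le> (\<Sum>n. x^n /\<^sub>R fact n)"
    by (rule sum_le_suminf) (use s assms in \<open>auto simp: sums_iff\<close>)
  then show ?thesis using s by (simp add: sums_iff divide_inverse mult.commute)
qed

lemma term_bound:
  fixes p :: real and n m k :: nat
  assumes p: "0 \<le> p" and m: "1 \<le> m" and mq: "real m \<le> real n * p" and k: "k \<le> m"
  shows "real (n choose k) * real k ^ m * p ^ k \<le> (real n * p) ^ m * exp (real m)"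
proof (cases "k = 0")
  case True
  then show ?thesis using m p by (simp add: zero_power)
next
  case False
  define q where "q = real n * p"
  have q0: "0 \<le> q" using p by (simp add: q_def)
  have C: "real (n choose k) * fact k \<le> real n ^ k"
    using binomial_fact_pow[of n k] by (metis of_nat_fact of_nat_le_iff of_nat_mult of_nat_power)
  have Cp: "real (n choose k) * p ^ k \<le> q ^ k / fact k"
  proof -
    have "real (n choose k) * p ^ k * fact k \<le> real n ^ k * p ^ k"
      using mult_right_mono[OF C, of "p^k"] p by (simp add: mult_ac)
    then show ?thesis by (simp add: q_def field_simps power_mult_distrib)
  qed
  have km: "real k ^ m = real k ^ k * real k ^ (m - k)"
    using k by (simp add: power_add[symmetric])
  have kq: "real k ^ (m - k) \<le> q ^ (m - k)"
    using k mq by (intro power_mono) (auto simp: q_def)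
  have "real (n choose k) * real k ^ m * p ^ k = (real (n choose k) * p ^ k) * real k ^ k * real k ^ (m - k)"
    by (simp add: km mult_ac)
  also have "\<dots> \<le> (q ^ k / fact k) * real k ^ k * q ^ (m - k)"
    using Cp kq q0 by (intro mult_mono) auto
  also have "\<dots> = q ^ m * (real k ^ k / fact k)"
    using k by (simp add: power_add[symmetric] field_simps)
  also have "\<dots> \<le> q ^ m * exp (real k)"
    using pow_fact_le_exp[of "real k" k] q0 by (intro mult_left_mono) auto
  also have "\<dots> \<le> q ^ m * exp (real m)"
    using k q0 by (intro mult_left_mono) auto
  finally show ?thesis by (simp add: q_def)
qed

lemma analytic:
  fixes p :: real and n m :: nat
  assumes p: "0 \<le> p" and m: "1 \<le> m" and mq: "real m \<le> real n * p"
  shows "(\<Sum>k=0..m. real (n choose k) * real k ^ m * p ^ k) \<le> (2 * exp 2 * real n * p) ^ m"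
proof -
  define q where "q = real n * p"
  have q0: "0 \<le> q" using p by (simp add: q_def)
  have "(\<Sum>k=0..m. real (n choose k) * real k ^ m * p ^ k) \<le> (\<Sum>k=0..m. q ^ m * exp (real m))"
    unfolding q_def by (intro sum_mono term_bound p m mq) auto
  also have "\<dots> = real (m + 1) * (q ^ m * exp 1 ^ m)"
    by (simp add: exp_of_nat_mult[symmetric])
  also have "\<dots> \<le> 2 ^ m * (q ^ m * exp 1 ^ m)"
  proof (intro mult_right_mono)
    have "m + 1 \<le> 2 ^ m" using Suc_leI[OF less_exp[of m]] by simp
    then show "real (m + 1) \<le> 2 ^ m" by (metis of_nat_le_iff of_nat_numeral of_nat_power)
  qed (use q0 in auto)
  also have "\<dots> = (2 * exp 1 * q) ^ m" by (simp add: power_mult_distrib mult_ac)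
  also have "\<dots> \<le> (2 * exp 2 * q) ^ m"
    using q0 by (intro power_mono mult_right_mono) auto
  finally show ?thesis by (simp add: q_def mult_ac)
qed

theorem mainTheorem6:
  fixes M :: "'a measure" and X :: "nat \<Rightarrow> 'a \<Rightarrow> real"
    and n m :: nat and p :: real
  assumes "prob_space M"
    and "\<And>i. i \<in> {1..n} \<Longrightarrow> X i \<in> borel_measurable M"
    and "\<And>i x. i \<in> {1..n} \<Longrightarrow> x \<in> space M \<Longrightarrow> 0 \<le> X i x \<and> X i x \<le> 1"
    and "m \<ge> 2" and "0 \<le> p" and "p \<le> 1"
    and "\<And>A. A \<subseteq> {1..n} \<Longrightarrow> card A \<le> m \<Longrightarrow>
           prob_space.expectation M (\<lambda>x. \<Prod>i\<in>A. X i x) \<le> p ^ card A"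
    and "real m \<le> real n * p"
  shows "prob_space.expectation M (\<lambda>x. (\<Sum>i=1..n. X i x) ^ m) \<le> (2 * exp 2 * real n * p) ^ m
     \<and> (\<forall>\<alpha>>0. prob_space.prob M {x \<in> space M. (\<Sum>i=1..n. X i x) \<ge> \<alpha> * real n * p}
            \<le> (2 * exp 2 / \<alpha>) ^ m)"
proof -
  interpret P: prob_space M by fact
  note Xm = assms(2) and Xb = assms(3)
  define S where "S = (\<lambda>x. \<Sum>i=1..n. X i x)"
  define Q where "Q = PiE {..<m} (\<lambda>_. {1..n::nat})"
  have fQ: "finite Q" by (simp add: Q_def finite_PiE)
  have Sm[measurable]: "S \<in> borel_measurable M"
    unfolding S_def by (intro borel_measurable_sum) (use Xm in auto)
  have S0: "\<And>x. x \<in> space M \<Longrightarrow> 0 \<le> S x"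
    unfolding S_def using Xb by (intro sum_nonneg) auto
  have intA: "integrable M (\<lambda>x. \<Prod>i\<in>A. X i x)" if A: "A \<subseteq> {1..n}" for A
  proof (rule P.integrable_const_bound[where B=1])
    show "AE x in M. norm (\<Prod>i\<in>A. X i x) \<le> 1"
    proof (intro AE_I2)
      fix x assume x: "x \<in> space M"
      have "0 \<le> (\<Prod>i\<in>A. X i x)" using Xb x A by (intro prod_nonneg) auto
      moreover have "(\<Prod>i\<in>A. X i x) \<le> 1" using Xb x A by (intro prod_le_1) auto
      ultimately show "norm (\<Prod>i\<in>A. X i x) \<le> 1" by simp
    qed
    show "(\<lambda>x. \<Prod>i\<in>A. X i x) \<in> borel_measurable M"
      by (intro borel_measurable_prod) (use Xm A in auto)
  qed
  have intf: "integrable M (\<lambda>x. \<Prod>j<m. X (f j) x)" if f: "f \<in> Q" for f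
  proof (rule P.integrable_const_bound[where B=1])
    have fi: "\<And>j. j < m \<Longrightarrow> f j \<in> {1..n}" using f by (auto simp: Q_def PiE_def Pi_def)
    show "AE x in M. norm (\<Prod>j<m. X (f j) x) \<le> 1"
    proof (intro AE_I2)
      fix x assume x: "x \<in> space M"
      have "0 \<le> (\<Prod>j<m. X (f j) x)" using Xb x fi by (intro prod_nonneg) auto
      moreover have "(\<Prod>j<m. X (f j) x) \<le> 1" using Xb x fi by (intro prod_le_1) auto
      ultimately show "norm (\<Prod>j<m. X (f j) x) \<le> 1" by simp
    qed
    show "(\<lambda>x. \<Prod>j<m. X (f j) x) \<in> borel_measurable M"
      by (intro borel_measurable_prod) (use Xm fi in auto)
  qed
  have "P.expectation (\<lambda>x. S x ^ m) = P.expectation (\<lambda>x. \<Sum>f\<in>Q. \<Prod>j<m. X (f j) x)"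
    unfolding S_def Q_def by (subst powsum_expand) auto
  also have "\<dots> = (\<Sum>f\<in>Q. P.expectation (\<lambda>x. \<Prod>j<m. X (f j) x))"
    by (rule Bochner_Integration.integral_sum[where I=Q and f="\<lambda>g x. \<Prod>j<m. X (g j) x"]) (rule intf)
  also have "\<dots> \<le> (\<Sum>f\<in>Q. p ^ card (f ` {..<m}))"
  proof (rule sum_mono)
    fix f assume f: "f \<in> Q"
    have fi: "f ` {..<m} \<subseteq> {1..n}" using f by (auto simp: Q_def PiE_def Pi_def)
    have "P.expectation (\<lambda>x. \<Prod>j<m. X (f j) x) \<le> P.expectation (\<lambda>x. \<Prod>i\<in>f ` {..<m}. X i x)"
      by (intro integral_mono intf f intA fi prod_image_le) (use Xb fi in auto)
    also have "\<dots> \<le> p ^ card (f ` {..<m})"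
      using assms(7)[OF fi] card_image_le[of "{..<m}" f] by simp
    finally show "P.expectation (\<lambda>x. \<Prod>j<m. X (f j) x) \<le> p ^ card (f ` {..<m})" .
  qed
  also have "\<dots> \<le> (\<Sum>k=0..m. real (n choose k) * real k ^ m * p ^ k)"
    unfolding Q_def by (rule count_bound) (use assms in auto)
  also have "\<dots> \<le> (2 * exp 2 * real n * p) ^ m"
    by (rule analytic) (use assms in auto)
  finally have E: "P.expectation (\<lambda>x. S x ^ m) \<le> (2 * exp 2 * real n * p) ^ m" .
  have intS: "integrable M (\<lambda>x. S x ^ m)"
  proof -
    have "integrable M (\<lambda>x. \<Sum>f\<in>Q. \<Prod>j<m. X (f j) x)"
      by (rule Bochner_Integration.integrable_sum[where I=Q and f="\<lambda>g x. \<Prod>j<m. X (g j) x"]) (rule intf)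
    moreover have "\<And>x. S x ^ m = (\<Sum>f\<in>Q. \<Prod>j<m. X (f j) x)"
      unfolding S_def Q_def by (subst powsum_expand) auto
    ultimately show ?thesis by simp
  qed
  have np: "0 < real n * p" using assms(4,8) by linarith
  have tail: "P.prob {x \<in> space M. S x \<ge> \<alpha> * real n * p} \<le> (2 * exp 2 / \<alpha>) ^ m"
    if a: "\<alpha> > 0" for \<alpha>
  proof -
    define t where "t = \<alpha> * real n * p"
    have t0: "0 < t" using a np by (simp add: t_def mult.assoc)
    have "P.prob {x \<in> space M. S x \<ge> t} \<le> P.prob {x \<in> space M. S x ^ m \<ge> t ^ m}"
      by (rule P.finite_measure_mono) (use t0 in \<open>auto intro: power_mono\<close>)
    also have "\<dots> \<le> P.expectation (\<lambda>x. S x ^ m) / t ^ m"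
      by (rule integral_Markov_inequality_measure[OF intS]) (use S0 t0 in auto)
    also have "\<dots> \<le> (2 * exp 2 * real n * p) ^ m / t ^ m"
      using E t0 by (intro divide_right_mono) auto
    also have "\<dots> = (2 * exp 2 / \<alpha>) ^ m"
    proof -
      have "n > 0" "p > 0" using np assms(5) by (auto simp: zero_less_mult_iff)
      then show ?thesis using a by (simp add: t_def power_divide[symmetric] field_simps)
    qed
    finally show ?thesis by (simp add: t_def)
  qed
  show ?thesis using E tail unfolding S_def by blast
qed

end
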